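(* (Euler Formula.) Let $A$ be a $q\times q$ complex matrix, $h$ a generalized polynomial with variable coefficients, $f:\mathbb{R}\to\mathbb{C}^q$ continuous and $y_0\in\mathbb{C}^q$. Then the unique continuous differentiable $y:\mathbb{R}\to\mathbb{C}^q$ satisfying $$y'(t)+h(t,A)\,y(t)=f(t),\qquad y(0)=y_0$$ is $$y(t)=\exp\!\left(\int_t^0h(u,A)\,du\right)y_0+\int_0^t\exp\!\left(\int_t^v h(u,A)\,du\right)f(v)\,dv.$$
   Context: A generalized polynomial is a family $g=(g_a)_{a\in\mathbb{C}}$ with $g_a=\sum_{n\ge0}g_{a,n}(X-a)^n\in\mathbb{C}[[X-a]]$, operations componentwise, a complex polynomial being identified with the family of its Taylor expansions at all points. For every generalized polynomial $g$ and nonconstant polynomial $D$ there is a unique polynomial $R$ of degree $<\deg D$ with $g=Dq+R$ for a generalized polynomial $q$; for a square matrix $A$ one defines $g(A):=R(A)$ where $D$ is any nonconstant polynomial annihilating $A$ (this does not depend on $D$). A generalized polynomial with variable coefficients is a family $h=(h_a)_{a\in\mathbb{C}}$ with $h_a=\sum_{n\ge0}h_{a,n}(t)(X-a)^n$, each $h_{a,n}:\mathbb{R}\to\mathbb{C}$ being $C^\infty$; $h(t,A)$ is the evaluation at $A$ of the generalized polynomial obtained by fixing $t$. $\exp$ is the usual matrix exponential. *)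

theory Defs
  imports "HOL-Analysis.Analysis" "HOL-Computational_Algebra.Polynomial_FPS"
begin

text \<open>A generalized polynomial: a family of formal power series, the series at a
  being read as a power series in (X - a).\<close>
type_synonym gpoly = "complex \<Rightarrow> complex fps"

definition taylor :: "complex poly \<Rightarrow> gpoly" where
  "taylor p = (\<lambda>a. fps_of_poly (p \<circ>\<^sub>p [:a, 1:]))"

definition mpow :: "complex^'q^'q \<Rightarrow> nat \<Rightarrow> complex^'q^'q" where
  "mpow A k = (((**) A) ^^ k) (mat 1)"

definition peval_mat :: "complex poly \<Rightarrow> complex^'q^'q \<Rightarrow> complex^'q^'q" where
  "peval_mat p A = (\<Sum>i\<le>degree p. mat (coeff p i) ** mpow A i)"

definition gp_rem :: "gpoly \<Rightarrow> complex poly \<Rightarrow> complex poly" where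
  "gp_rem g D = (THE R. degree R < degree D \<and>
      (\<exists>q::gpoly. \<forall>a. g a = taylor D a * q a + taylor R a))"

definition gp_eval :: "gpoly \<Rightarrow> complex^'q^'q \<Rightarrow> complex^'q^'q" where
  "gp_eval g A = (let D = (SOME D. 0 < degree D \<and> peval_mat D A = 0)
                  in peval_mat (gp_rem g D) A)"

type_synonym vgpoly = "real \<Rightarrow> gpoly"

definition vgp_eval :: "vgpoly \<Rightarrow> real \<Rightarrow> complex^'q^'q \<Rightarrow> complex^'q^'q" where
  "vgp_eval h t A = gp_eval (h t) A"

definition smooth_fun :: "(real \<Rightarrow> complex) \<Rightarrow> bool" where
  "smooth_fun f \<longleftrightarrow> (\<exists>F. F 0 = f \<and>
      (\<forall>k t. (F k has_vector_derivative F (Suc k) t) (at t)))"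

definition mexp :: "complex^'q^'q \<Rightarrow> complex^'q^'q" where
  "mexp M = (\<Sum>k. (1 / fact k) *\<^sub>R mpow M k)"

definition oint :: "real \<Rightarrow> real \<Rightarrow> (real \<Rightarrow> 'b::euclidean_space) \<Rightarrow> 'b" where
  "oint a b f = (if a \<le> b then integral {a..b} f else - integral {b..a} f)"

end

theory Submission
  imports Defs "HOL-Computational_Algebra.Fundamental_Theorem_Algebra"
begin


lemma taylor_mult: "taylor (p * q) a = taylor p a * taylor q a"
  by (simp add: taylor_def pcompose_mult fps_of_poly_mult)
lemma taylor_add: "taylor (p + q) a = taylor p a + taylor q a"
  by (simp add: taylor_def pcompose_add fps_of_poly_add)
lemma taylor_diff: "taylor (p - q) a = taylor p a - taylor q a"
  by (simp add: taylor_def pcompose_diff fps_of_poly_diff)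
lemma taylor_smult: "taylor (smult c p) a = fps_const c * taylor p a"
  by (simp add: taylor_def pcompose_smult fps_of_poly_smult)
lemma taylor_sum: "taylor (sum f S) a = (\<Sum>i\<in>S. taylor (f i) a)"
  by (simp add: taylor_def pcompose_sum fps_of_poly_sum)
lemma taylor_const: "taylor [:c:] a = fps_const c"
  by (simp add: taylor_def)
lemma taylor_0: "taylor 0 a = 0"
  by (simp add: taylor_def)
lemma taylor_nth0: "fps_nth (taylor p a) 0 = poly p a"
  by (simp add: taylor_def poly_pcompose poly_0_coeff_0[symmetric])
lemma taylor_lin_same: "taylor [:-c,1:] c = fps_X"
proof -
  have "[:-c,1:] \<circ>\<^sub>p [:c,1:] = [:0,1:]"
    by (simp add: pcompose_pCons)
  then show ?thesis by (simp add: taylor_def fps_of_poly_pCons)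
qed
lemma taylor_nz: "p \<noteq> 0 \<Longrightarrow> taylor p a \<noteq> 0"
  by (simp add: taylor_def pcompose_eq_0_iff) 

lemma fps_X_dvd: "fps_nth (f::complex fps) 0 = 0 \<Longrightarrow> fps_X dvd f"
proof -
  assume f0: "fps_nth f 0 = 0"
  have "f = 0 \<or> 1 \<le> subdegree f" using f0 subdegree_eq_0_iff by fastforce
  then have "f = fps_X ^ 1 * fps_shift 1 f" by (rule fps_conv_fps_X_power_mult_fps_shift)
  then show ?thesis by (metis dvd_triv_left power_one_right)
qed

lemma lin_div: "\<exists>r0. \<forall>a. taylor [:-c,1:] a dvd (g a - fps_const r0)"
proof (intro exI allI)
  fix a
  show "taylor [:-c,1:] a dvd (g a - fps_const (fps_nth (g c) 0))"
  proof (cases "a = c")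
    case True
    then show ?thesis using taylor_lin_same[of c] by (auto intro!: fps_X_dvd)
  next
    case False
    then have "is_unit (taylor [:-c,1:] a)" by (simp add: fps_is_unit_iff taylor_nth0)
    then show ?thesis by (rule unit_imp_dvd)
  qed
qed

lemma gp_exist:
  "(D::complex poly) \<noteq> 0 \<Longrightarrow> \<exists>R. (R = 0 \<or> degree R < degree D) \<and> (\<forall>a. taylor D a dvd (g a - taylor R a))"
proof (induction "degree D" arbitrary: D g rule: less_induct)
  case less
  show ?case
  proof (cases "degree D = 0")
    case True
    then obtain k where Dk: "D = [:k:]" by (meson degree_eq_zeroE)
    with less.prems have "k \<noteq> 0" by auto
    then have "is_unit (taylor D a)" for a by (simp add: Dk taylor_const fps_is_unit_iff)
    then show ?thesis by (intro exI[of _ 0]) (auto intro: unit_imp_dvd)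
  next
    case False
    then obtain c where "poly D c = 0" by (metis fundamental_theorem_of_algebra constant_degree)
    then obtain D' where DD: "D = [:-c,1:] * D'" using poly_eq_0_iff_dvd by blast
    with less.prems have D'0: "D' \<noteq> 0" by auto
    have degD: "degree D = degree D' + 1" using D'0 unfolding DD by (subst degree_mult_eq) simp_all
    from less.hyps[of D' g] degD D'0 obtain R' where
      R': "R' = 0 \<or> degree R' < degree D'" "\<forall>a. taylor D' a dvd (g a - taylor R' a)" by auto
    then have "\<forall>a. \<exists>q. g a - taylor R' a = taylor D' a * q" unfolding dvd_def by blast
    from choice[OF this] obtain q' where q': "\<And>a. g a - taylor R' a = taylor D' a * q' a"
      by blast
    obtain r0 where r0: "\<And>a. taylor [:-c,1:] a dvd (q' a - fps_const r0)" using lin_div by blast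
    define R where "R = smult r0 D' + R'"
    have "degree R \<le> degree D'" unfolding R_def using R'(1)
      by (metis degree_0 degree_add_le degree_smult_le dual_order.strict_implies_order le0)
    then have "degree R < degree D" using degD by simp
    moreover have "taylor D a dvd (g a - taylor R a)" for a
    proof -
      have "g a - taylor R a = taylor D' a * (q' a - fps_const r0)"
        unfolding R_def taylor_add taylor_smult using q'[of a] by (simp add: algebra_simps)
      moreover have "taylor D a = taylor D' a * taylor [:-c,1:] a" unfolding DD taylor_mult by simp
      ultimately show ?thesis using r0[of a] by (simp add: mult_dvd_mono)
    qed
    ultimately show ?thesis by blast
  qed
qed

lemma gp_uniq_aux:
  "(P::complex poly) \<noteq> 0 \<Longrightarrow> (\<forall>a. taylor (D::complex poly) a dvd taylor P a) \<Longrightarrow> degree D \<le> degree P"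
proof (induction "degree D" arbitrary: D P rule: less_induct)
  case less
  show ?case
  proof (cases "degree D = 0")
    case True then show ?thesis by simp
  next
    case False
    then obtain c where "poly D c = 0" by (metis fundamental_theorem_of_algebra constant_degree)
    then obtain D' where DD: "D = [:-c,1:] * D'" using poly_eq_0_iff_dvd by blast
    with False have D'0: "D' \<noteq> 0" by auto
    have degD: "degree D = degree D' + 1" using D'0 unfolding DD by (subst degree_mult_eq) simp_all
    have "fps_X dvd taylor P c" using less.prems(2) DD taylor_lin_same[of c]
      by (metis dvd_mult_left taylor_mult)
    then have "fps_nth (taylor P c) 0 = 0" by (metis dvd_def fps_X_mult_nth)
    then have "poly P c = 0" by (simp add: taylor_nth0)
    then obtain P' where PP: "P = [:-c,1:] * P'" using poly_eq_0_iff_dvd by blast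
    with less.prems have P'0: "P' \<noteq> 0" by auto
    have degP: "degree P = degree P' + 1" using P'0 unfolding PP by (subst degree_mult_eq) simp_all
    have "taylor D' a dvd taylor P' a" for a
    proof -
      have "taylor [:-c,1:] a \<noteq> 0" by (simp add: taylor_nz)
      moreover have "taylor [:-c,1:] a * taylor D' a dvd taylor [:-c,1:] a * taylor P' a"
        using less.prems(2) DD PP by (metis taylor_mult)
      ultimately show ?thesis by simp
    qed
    then have "degree D' \<le> degree P'" using less.hyps[of D' P'] degD P'0 by auto
    then show ?thesis using degD degP by simp
  qed
qed

definition isrem :: "gpoly \<Rightarrow> complex poly \<Rightarrow> complex poly \<Rightarrow> bool" where
  "isrem g D R \<longleftrightarrow> degree R < degree D \<and> (\<forall>a. taylor D a dvd (g a - taylor R a))"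

lemma isrem_exists: "0 < degree D \<Longrightarrow> \<exists>R. isrem g D R"
  unfolding isrem_def using gp_exist[of D g] by (metis degree_0 gr_implies_not0 )

lemma isrem_unique: "isrem g D R1 \<Longrightarrow> isrem g D R2 \<Longrightarrow> R1 = R2"
proof (rule ccontr)
  assume a: "isrem g D R1" "isrem g D R2" "R1 \<noteq> R2"
  have "taylor D x dvd taylor (R2 - R1) x" for x
  proof -
    have "taylor D x dvd (g x - taylor R1 x) - (g x - taylor R2 x)"
      using a unfolding isrem_def by (blast intro: dvd_diff)
    then show ?thesis by (simp add: taylor_diff)
  qed
  then have "degree D \<le> degree (R2 - R1)" using a(3) by (intro gp_uniq_aux) auto
  moreover have "degree (R2 - R1) < degree D" using a unfolding isrem_def
    by (meson degree_diff_le_max max_less_iff_conj le_less_trans)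
  ultimately show False by simp
qed

lemma gp_rem_isrem:
  assumes "0 < degree D" shows "isrem g D (gp_rem g D)"
proof -
  have eq: "(degree R < degree D \<and> (\<exists>q::gpoly. \<forall>a. g a = taylor D a * q a + taylor R a)) \<longleftrightarrow> isrem g D R" for R
  proof
    assume "degree R < degree D \<and> (\<exists>q::gpoly. \<forall>a. g a = taylor D a * q a + taylor R a)"
    then show "isrem g D R" unfolding isrem_def by (metis add_diff_cancel_right' dvd_triv_left)
  next
    assume "isrem g D R"
    then have "degree R < degree D" "\<forall>a. \<exists>qa. g a - taylor R a = taylor D a * qa"
      unfolding isrem_def dvd_def by auto
    then show "degree R < degree D \<and> (\<exists>q::gpoly. \<forall>a. g a = taylor D a * q a + taylor R a)"
      by (metis diff_add_cancel)
  qed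
  have "\<exists>!R. isrem g D R" using isrem_exists[OF assms] isrem_unique by blast
  then show ?thesis unfolding gp_rem_def eq by (rule theI')
qed


lemma mpow_Suc: "mpow A (Suc k) = A ** mpow A k"
  by (simp add: mpow_def)
lemma mpow_0: "mpow A 0 = mat 1"
  by (simp add: mpow_def)

lemma delta_sum1: "(\<Sum>k\<in>UNIV. (if i = k then c else 0) * (g (k::'n::finite)::'a::semiring_1)) = c * g i"
proof -
  have "(\<Sum>k\<in>UNIV. (if i = k then c else 0) * g k) = (\<Sum>k\<in>UNIV. if k = i then c * g k else 0)"
    by (rule sum.cong) auto
  also have "\<dots> = c * g i" by (rule trans[OF sum.delta]) auto
  finally show ?thesis .
qed

lemma delta_sum2: "(\<Sum>k\<in>UNIV. (g (k::'n::finite)::'a::semiring_1) * (if k = j then c else 0)) = g j * c"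
proof -
  have "(\<Sum>k\<in>UNIV. g k * (if k = j then c else 0)) = (\<Sum>k\<in>UNIV. if k = j then g k * c else 0)"
    by (rule sum.cong) auto
  also have "\<dots> = g j * c" by (rule trans[OF sum.delta]) auto
  finally show ?thesis .
qed

lemma mat_mult_left: "mat c ** M = (\<chi> i j. c * M $ i $ j)"
  unfolding matrix_matrix_mult_def mat_def by (simp add: vec_eq_iff delta_sum1)

lemma mat_mult_right: "M ** mat c = (\<chi> i j. c * (M::complex^'n^'m) $ i $ j)"
  unfolding matrix_matrix_mult_def mat_def by (simp add: vec_eq_iff delta_sum2 mult.commute)

lemma mat_comm: "mat c ** (M::complex^'n^'n) = M ** mat c"
  by (simp add: mat_mult_left mat_mult_right)

lemma matrix_add_rdistrib': "(B + C) ** (A::'a::semiring_1^_^_) = B ** A + C ** A"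
  by (vector matrix_matrix_mult_def sum.distrib[symmetric] field_simps)

lemma mat_of_real: "mat (complex_of_real r) ** (M::complex^'n^'n) = r *\<^sub>R M"
proof -
  have "(r *\<^sub>R M) $ i $ j = complex_of_real r * M $ i $ j" for i j
    by (metis vector_scaleR_component scaleR_conv_of_real)
  then show ?thesis unfolding mat_mult_left vec_eq_iff by simp
qed

lemma mat_add: "mat (a + b) = (mat a + mat b :: 'a::monoid_add^'n^'n)"
  by (simp add: mat_def vec_eq_iff)

lemma mat_mult_mat: "mat a ** mat b = (mat (a * b) :: complex^'n^'n)"
  unfolding mat_mult_left by (simp add: mat_def vec_eq_iff)

lemma matrix_sum_right: "finite S \<Longrightarrow> M ** sum f S = (\<Sum>i\<in>S. M ** f i)"
  by (induction S rule: finite_induct) (simp_all add: matrix_add_ldistrib)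

lemma matrix_sum_left: "finite S \<Longrightarrow> sum f S ** M = (\<Sum>i\<in>S. f i ** M)"
  by (induction S rule: finite_induct) (simp_all add: matrix_add_rdistrib')

definition bc :: "complex^'n^'n \<Rightarrow> complex^'n^'n \<Rightarrow> bool" where
  "bc A M \<longleftrightarrow> (\<forall>N. N ** A = A ** N \<longrightarrow> M ** N = N ** M)"

lemma bc_mpow: "bc A (mpow A k)"
  unfolding bc_def
proof (intro allI impI)
  fix N assume NA: "N ** A = A ** N"
  show "mpow A k ** N = N ** mpow A k"
  proof (induction k)
    case 0 then show ?case by (simp add: mpow_0)
  next
    case (Suc k)
    have "mpow A (Suc k) ** N = A ** (mpow A k ** N)" by (simp add: mpow_Suc matrix_mul_assoc)
    also have "\<dots> = (A ** N) ** mpow A k" by (simp add: Suc matrix_mul_assoc)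
    also have "\<dots> = N ** mpow A (Suc k)" by (simp add: NA[symmetric] mpow_Suc matrix_mul_assoc)
    finally show ?case .
  qed
qed

lemma bc_matmult: "bc A M \<Longrightarrow> bc A (mat c ** M)"
  unfolding bc_def by (metis matrix_mul_assoc mat_comm)

lemma bc_sum: "finite S \<Longrightarrow> (\<And>i. i \<in> S \<Longrightarrow> bc A (f i)) \<Longrightarrow> bc A (sum f S)"
  unfolding bc_def by (simp add: matrix_sum_left matrix_sum_right)

lemma bc_peval: "bc A (peval_mat p A)"
  unfolding peval_mat_def by (intro bc_sum bc_matmult bc_mpow) auto

lemma bc_A: "bc A M \<Longrightarrow> M ** A = A ** M"
  unfolding bc_def by simp

lemma bc_comm: "bc A M1 \<Longrightarrow> bc A M2 \<Longrightarrow> M1 ** M2 = M2 ** M1"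
  unfolding bc_def by (metis)

lemma peval_mat_alt:
  assumes "degree p \<le> N"
  shows "peval_mat p A = (\<Sum>i\<le>N. mat (coeff p i) ** mpow A i)"
  unfolding peval_mat_def
proof (rule sum.mono_neutral_right[symmetric])
  show "\<forall>i\<in>{..N} - {..degree p}. mat (coeff p i) ** mpow A i = 0"
    by (auto simp: coeff_eq_0)
qed (use assms in auto)

lemma peval_mat_add: "peval_mat (p + q) A = peval_mat p A + peval_mat q A"
proof -
  define N where "N = max (degree p) (degree q)"
  have "degree (p + q) \<le> N" unfolding N_def by (rule degree_add_le_max)
  then show ?thesis
    by (simp add: peval_mat_alt[of "p+q" N] peval_mat_alt[of p N] peval_mat_alt[of q N] N_def
        mat_add matrix_add_rdistrib' sum.distrib)
qed

lemma peval_mat_zero: "peval_mat 0 A = 0"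
  by (simp add: peval_mat_def)

lemma peval_mat_smult: "peval_mat (smult c p) A = mat c ** peval_mat p A"
proof -
  have "degree (smult c p) \<le> degree p" by (rule degree_smult_le)
  then show ?thesis
    by (simp add: peval_mat_alt[of "smult c p" "degree p"] peval_mat_def matrix_sum_right
        matrix_mul_assoc mat_mult_mat)
qed

lemma peval_mat_sum: "finite S \<Longrightarrow> peval_mat (sum f S) A = (\<Sum>i\<in>S. peval_mat (f i) A)"
  by (induction S rule: finite_induct) (simp_all add: peval_mat_zero peval_mat_add)


lemma peval_mat_monom: "peval_mat (monom c k) A = mat c ** mpow A k"
proof -
  have "peval_mat (monom c k) A = (\<Sum>i\<le>k. mat (coeff (monom c k) i) ** mpow A i)"
    by (rule peval_mat_alt) (simp add: degree_monom_le)
  also have "\<dots> = (\<Sum>i\<le>k. if i = k then mat c ** mpow A i else 0)"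
    by (rule sum.cong) (auto simp: coeff_monom)
  also have "\<dots> = mat c ** mpow A k" by (rule trans[OF sum.delta]) auto
  finally show ?thesis .
qed

lemma mat_nz: "c \<noteq> 0 \<Longrightarrow> mat c \<noteq> (0::complex^'n^'n)"
  by (auto simp: mat_def vec_eq_iff)

lemma annih_exists: "\<exists>D. 0 < degree D \<and> peval_mat D (A::complex^'n^'n) = 0"
proof -
  define N where "N = DIM(complex^'n^'n)"
  show ?thesis
  proof (cases "inj_on (mpow A) {..N}")
    case False
    then obtain i j where ij: "i \<noteq> j" "mpow A i = mpow A j" unfolding inj_on_def by auto
    define lo where "lo = min i j"
    define hi where "hi = max i j"
    have lh: "lo < hi" "mpow A lo = mpow A hi" using ij unfolding lo_def hi_def by (auto simp: min_def max_def)
    define D where "D = monom (1::complex) hi - monom 1 lo"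
    have "coeff D hi \<noteq> 0" using lh(1) by (simp add: D_def coeff_monom)
    then have "hi \<le> degree D" by (rule le_degree)
    then have "0 < degree D" using lh(1) by simp
    moreover have "peval_mat D A = 0"
    proof -
      have "D + monom 1 lo = monom 1 hi" by (simp add: D_def)
      then have "peval_mat D A + peval_mat (monom 1 lo) A = peval_mat (monom 1 hi) A"
        by (metis peval_mat_add)
      then show ?thesis using lh(2) by (simp add: peval_mat_monom)
    qed
    ultimately show ?thesis by blast
  next
    case True
    define S where "S = mpow A ` {..N}"
    have finS: "finite S" unfolding S_def by simp
    have "card S = N + 1" unfolding S_def using card_image[OF True] by simp
    then have "dependent S" by (intro dependent_biggerset) (simp add: N_def)
    then obtain u where u: "\<exists>v\<in>S. u v \<noteq> 0" "(\<Sum>v\<in>S. u v *\<^sub>R v) = 0"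
      using dependent_finite[OF finS] by blast
    define p where "p = (\<Sum>i\<le>N. monom (complex_of_real (u (mpow A i))) i)"
    have cp: "coeff p k = (if k \<le> N then complex_of_real (u (mpow A k)) else 0)" for k
    proof -
      have "coeff p k = (\<Sum>i\<le>N. if i = k then complex_of_real (u (mpow A i)) else 0)"
        unfolding p_def coeff_sum by (rule sum.cong) (auto simp: coeff_monom)
      also have "\<dots> = (if k \<le> N then complex_of_real (u (mpow A k)) else 0)"
        by (rule trans[OF sum.delta]) auto
      finally show ?thesis .
    qed
    have pe: "peval_mat p A = 0"
    proof -
      have "peval_mat p A = (\<Sum>i\<le>N. mat (complex_of_real (u (mpow A i))) ** mpow A i)"
        unfolding p_def by (simp add: peval_mat_sum peval_mat_monom)
      also have "\<dots> = (\<Sum>i\<le>N. u (mpow A i) *\<^sub>R mpow A i)" by (simp add: mat_of_real)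
      also have "\<dots> = (\<Sum>v\<in>S. u v *\<^sub>R v)" unfolding S_def
        by (rule sum.reindex[OF True, symmetric, unfolded comp_def])
      finally show ?thesis using u(2) by simp
    qed
    have "0 < degree p"
    proof (rule ccontr)
      assume "\<not> 0 < degree p"
      then have d0: "degree p = 0" by simp
      obtain i0 where i0: "i0 \<le> N" "u (mpow A i0) \<noteq> 0" using u(1) unfolding S_def by auto
      have "coeff p i0 \<noteq> 0" using i0 by (simp add: cp)
      then have "p \<noteq> 0" by auto
      then have "coeff p 0 \<noteq> 0" using d0 by (metis leading_coeff_0_iff)
      moreover have "peval_mat p A = mat (coeff p 0)"
        unfolding peval_mat_def d0 by (simp add: mpow_0)
      ultimately show False using pe mat_nz by metis
    qed
    then show ?thesis using pe by blast
  qed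
qed

definition ebas :: "complex \<Rightarrow> nat \<Rightarrow> gpoly" where
  "ebas a n = (\<lambda>b. if b = a then fps_X ^ n else 0)"

lemma data_dvd:
  assumes dp: "0 < degree D" and z: "\<And>n. poly D a = 0 \<Longrightarrow> n < degree D \<Longrightarrow> fps_nth u n = 0"
  shows "taylor D a dvd u"
proof (cases "poly D a = 0")
  case False
  then have "is_unit (taylor D a)" by (simp add: fps_is_unit_iff taylor_nth0)
  then show ?thesis by (rule unit_imp_dvd)
next
  case True
  show ?thesis
  proof (cases "u = 0")
    case True then show ?thesis by simp
  next
    case False
    have D0: "D \<noteq> 0" using dp by auto
    have tnz: "taylor D a \<noteq> 0" using D0 by (rule taylor_nz)
    have "fps_nth (taylor D a) (degree D) \<noteq> 0"
    proof -
      have "degree (D \<circ>\<^sub>p [:a, 1:]) = degree D" by (simp add: degree_pcompose)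
      moreover have "D \<circ>\<^sub>p [:a, 1:] \<noteq> 0" using D0 by (simp add: pcompose_eq_0_iff)
      ultimately show ?thesis unfolding taylor_def by (metis fps_of_poly_nth leading_coeff_0_iff)
    qed
    then have "subdegree (taylor D a) \<le> degree D" by (rule subdegree_leI)
    moreover have "degree D \<le> subdegree u" using False z True by (intro subdegree_geI) auto
    ultimately show ?thesis using fps_dvd_iff[OF tnz False] by simp
  qed
qed

lemma gp_rem_decomp:
  assumes dp: "0 < degree D"
  shows "gp_rem g D = (\<Sum>k\<in>{a. poly D a = 0} \<times> {..<degree D}.
            smult (fps_nth (g (fst k)) (snd k)) (gp_rem (ebas (fst k) (snd k)) D))"
proof -
  define K where "K = {a. poly D a = 0} \<times> {..<degree D}"
  define R where "R k = gp_rem (ebas (fst k) (snd k)) D" for k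
  define c where "c k = fps_nth (g (fst k)) (snd k)" for k
  define S where "S = (\<Sum>k\<in>K. smult (c k) (R k))"
  have D0: "D \<noteq> 0" using dp by auto
  have finK: "finite K" unfolding K_def using poly_roots_finite[OF D0] by simp
  have isR: "isrem (ebas (fst k) (snd k)) D (R k)" for k unfolding R_def by (rule gp_rem_isrem[OF dp])
  have "isrem g D S"
    unfolding isrem_def
  proof (intro conjI allI)
    show "degree S < degree D" unfolding S_def
      by (rule degree_sum_less[OF _ dp]) (metis isR isrem_def degree_smult_le le_less_trans)
    fix a
    have tS: "taylor S a = (\<Sum>k\<in>K. fps_const (c k) * taylor (R k) a)"
      unfolding S_def by (simp add: taylor_sum taylor_smult)
    have split: "g a - taylor S a = (g a - (\<Sum>k\<in>K. fps_const (c k) * ebas (fst k) (snd k) a))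
        + (\<Sum>k\<in>K. fps_const (c k) * (ebas (fst k) (snd k) a - taylor (R k) a))"
      unfolding tS by (simp add: right_diff_distrib sum_subtractf)
    have d2: "taylor D a dvd (\<Sum>k\<in>K. fps_const (c k) * (ebas (fst k) (snd k) a - taylor (R k) a))"
      using isR unfolding isrem_def by (intro dvd_sum dvd_mult) auto
    have d1: "taylor D a dvd (g a - (\<Sum>k\<in>K. fps_const (c k) * ebas (fst k) (snd k) a))"
    proof (rule data_dvd[OF dp])
      fix n assume r: "poly D a = 0" and n: "n < degree D"
      have "fps_nth (\<Sum>k\<in>K. fps_const (c k) * ebas (fst k) (snd k) a) n
          = (\<Sum>k\<in>K. if k = (a, n) then c k else 0)"
        by (auto simp: fps_sum_nth ebas_def fps_X_power_nth intro!: sum.cong)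
      also have "\<dots> = c (a, n)" using r n finK by (subst sum.delta) (auto simp: K_def)
      finally show "fps_nth (g a - (\<Sum>k\<in>K. fps_const (c k) * ebas (fst k) (snd k) a)) n = 0"
        by (simp add: c_def)
    qed
    show "taylor D a dvd (g a - taylor S a)" unfolding split using d1 d2 by (rule dvd_add)
  qed
  then have "gp_rem g D = S" using gp_rem_isrem[OF dp] isrem_unique by blast
  then show ?thesis unfolding S_def K_def R_def c_def .
qed


typedef (overloaded) ('n::finite) cm = "UNIV :: ((complex^'n) \<Rightarrow>\<^sub>L (complex^'n)) set"
  morphisms cmrep cmabs by simp

setup_lifting type_definition_cm

instantiation cm :: (finite) real_normed_algebra_1
begin
lift_definition zero_cm :: "'a cm" is "0 :: ((complex^'a) \<Rightarrow>\<^sub>L (complex^'a))" .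
lift_definition one_cm :: "'a cm" is "id_blinfun :: ((complex^'a) \<Rightarrow>\<^sub>L (complex^'a))" .
lift_definition plus_cm :: "'a cm \<Rightarrow> 'a cm \<Rightarrow> 'a cm" is "(+) :: ((complex^'a) \<Rightarrow>\<^sub>L (complex^'a)) \<Rightarrow> _ \<Rightarrow> _" .
lift_definition minus_cm :: "'a cm \<Rightarrow> 'a cm \<Rightarrow> 'a cm" is "(-) :: ((complex^'a) \<Rightarrow>\<^sub>L (complex^'a)) \<Rightarrow> _ \<Rightarrow> _" .
lift_definition uminus_cm :: "'a cm \<Rightarrow> 'a cm" is "uminus :: ((complex^'a) \<Rightarrow>\<^sub>L (complex^'a)) \<Rightarrow> _" .
lift_definition times_cm :: "'a cm \<Rightarrow> 'a cm \<Rightarrow> 'a cm" is "(o\<^sub>L) :: ((complex^'a) \<Rightarrow>\<^sub>L (complex^'a)) \<Rightarrow> _ \<Rightarrow> _" .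
lift_definition scaleR_cm :: "real \<Rightarrow> 'a cm \<Rightarrow> 'a cm" is "scaleR :: real \<Rightarrow> ((complex^'a) \<Rightarrow>\<^sub>L (complex^'a)) \<Rightarrow> _" .
lift_definition norm_cm :: "'a cm \<Rightarrow> real" is "norm :: ((complex^'a) \<Rightarrow>\<^sub>L (complex^'a)) \<Rightarrow> real" .
definition dist_cm :: "'a cm \<Rightarrow> 'a cm \<Rightarrow> real" where "dist_cm a b = norm (a - b)"
definition sgn_cm :: "'a cm \<Rightarrow> 'a cm" where "sgn_cm x = scaleR (inverse (norm x)) x"
definition uniformity_cm :: "('a cm \<times> 'a cm) filter" where
  "uniformity_cm = (INF e\<in>{0 <..}. principal {(x, y). dist x y < e})"
definition open_cm :: "'a cm set \<Rightarrow> bool" where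
  "open_cm S = (\<forall>x\<in>S. \<forall>\<^sub>F (x', y) in uniformity. x' = x \<longrightarrow> y \<in> S)"
instance
proof
  fix a b c :: "'a cm" and r s :: real
  show "a + b + c = a + (b + c)" by transfer (simp add: algebra_simps)
  show "a + b = b + a" by transfer (simp add: algebra_simps)
  show "0 + a = a" by transfer simp
  show "- a + a = 0" by transfer simp
  show "a - b = a + - b" by transfer simp
  show "r *\<^sub>R (a + b) = r *\<^sub>R a + r *\<^sub>R b" by transfer (simp add: algebra_simps)
  show "(r + s) *\<^sub>R a = r *\<^sub>R a + s *\<^sub>R a" by transfer (simp add: algebra_simps)
  show "r *\<^sub>R s *\<^sub>R a = (r * s) *\<^sub>R a" by transfer simp
  show "1 *\<^sub>R a = a" by transfer simp
  show "a * b * c = a * (b * c)" by transfer (rule blinfun_eqI, simp)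
  show "(a + b) * c = a * c + b * c" by transfer (rule blinfun_eqI, simp add: blinfun.bilinear_simps)
  show "a * (b + c) = a * b + a * c" by transfer (rule blinfun_eqI, simp add: blinfun.bilinear_simps)
  show "r *\<^sub>R a * b = r *\<^sub>R (a * b)" by transfer (rule blinfun_eqI, simp add: blinfun.bilinear_simps)
  show "a * r *\<^sub>R b = r *\<^sub>R (a * b)" by transfer (rule blinfun_eqI, simp add: blinfun.bilinear_simps)
  show "1 * a = a" by transfer (rule blinfun_eqI, simp)
  show "a * 1 = a" by transfer (rule blinfun_eqI, simp)
  show "(0::'a cm) \<noteq> 1"
  proof transfer
    have "blinfun_apply (id_blinfun :: (complex^'a) \<Rightarrow>\<^sub>L (complex^'a)) (axis undefined 1) \<noteq> 0"
      by (simp add: axis_def vec_eq_iff)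
    then show "(0 :: (complex^'a) \<Rightarrow>\<^sub>L (complex^'a)) \<noteq> id_blinfun" by (metis zero_blinfun.rep_eq)
  qed
  show "dist a b = norm (a - b)" by (simp add: dist_cm_def)
  show "sgn a = inverse (norm a) *\<^sub>R a" by (simp add: sgn_cm_def)
  show "(uniformity :: ('a cm \<times> 'a cm) filter) = (INF e\<in>{0 <..}. principal {(x, y). dist x y < e})"
    by (simp add: uniformity_cm_def)
  show "open (U :: 'a cm set) = (\<forall>x\<in>U. \<forall>\<^sub>F (x', y) in uniformity. x' = x \<longrightarrow> y \<in> U)" for U
    by (simp add: open_cm_def)
  show "norm a = 0 \<longleftrightarrow> a = 0" by transfer simp
  show "norm (a + b) \<le> norm a + norm b" by transfer (rule norm_triangle_ineq)
  show "norm (r *\<^sub>R a) = \<bar>r\<bar> * norm a" by transfer simp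
  show "norm (a * b) \<le> norm a * norm b" by transfer (rule norm_blinfun_compose)
  show "norm (1::'a cm) = 1" by transfer simp
qed
end

instance cm :: (finite) banach
proof
  fix X :: "nat \<Rightarrow> ('n::finite) cm"
  assume "Cauchy X"
  then have "Cauchy (\<lambda>n. cmrep (X n))"
    unfolding Cauchy_def dist_norm by (simp add: norm_cm.rep_eq minus_cm.rep_eq)
  then obtain L where "(\<lambda>n. cmrep (X n)) \<longlonglongrightarrow> L" using Cauchy_convergent_iff convergent_def by blast
  then have "X \<longlonglongrightarrow> cmabs L"
    unfolding tendsto_iff dist_norm by (simp add: norm_cm.rep_eq minus_cm.rep_eq cmabs_inverse)
  then show "convergent X" by (auto simp: convergent_def)
qed


lemma exp_minus_lin_bound:
  fixes x :: "'a::{real_normed_algebra_1,banach}"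
  shows "norm (exp x - 1 - x) \<le> norm x ^ 2 * exp (norm x)"
proof -
  have s: "summable (\<lambda>n. x ^ n /\<^sub>R fact n)" by (rule summable_exp_generic)
  have "exp x = (\<Sum>n. x ^ (n + 2) /\<^sub>R fact (n + 2)) + (\<Sum>n<2. x ^ n /\<^sub>R fact n)"
    unfolding exp_def using suminf_split_initial_segment[OF s, of 2] by simp
  then have e: "exp x - 1 - x = (\<Sum>n. x ^ (n + 2) /\<^sub>R fact (n + 2))"
    by (simp add: numeral_2_eq_2)
  have sr: "summable (\<lambda>n. norm x ^ 2 * (norm x ^ n /\<^sub>R fact n))"
    by (intro summable_mult summable_exp_generic)
  have b: "norm (x ^ (n + 2) /\<^sub>R fact (n + 2)) \<le> norm x ^ 2 * (norm x ^ n /\<^sub>R fact n)" for n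
  proof -
    have "norm (x ^ (n + 2) /\<^sub>R fact (n + 2)) = norm (x ^ (n+2)) / fact (n+2)"
      by (simp only: norm_scaleR abs_inverse divide_inverse_commute) simp
    also have "\<dots> \<le> norm x ^ (n+2) / fact (n+2)"
      by (intro divide_right_mono norm_power_ineq) simp
    also have "\<dots> \<le> norm x ^ (n+2) / fact n"
      by (intro divide_left_mono fact_mono) auto
    also have "\<dots> = norm x ^ 2 * (norm x ^ n /\<^sub>R fact n)"
    proof -
      have "norm x ^ (n+2) = norm x^2 * norm x^n" by (metis power_add mult.commute)
      then show ?thesis by (simp add: divide_inverse ac_simps)
    qed
    finally show ?thesis .
  qed
  have "norm (exp x - 1 - x) \<le> (\<Sum>n. norm x ^ 2 * (norm x ^ n /\<^sub>R fact n))"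
    unfolding e by (rule norm_suminf_le[OF b sr])
  also have "\<dots> = norm x ^ 2 * exp (norm x)"
    unfolding exp_def by (rule suminf_mult[OF summable_exp_generic])
  finally show ?thesis .
qed

lemma exp_deriv_comm:
  fixes X :: "real \<Rightarrow> 'a::{real_normed_algebra_1,banach}"
  assumes d: "(X has_vector_derivative X') (at t)" and c: "\<And>s. X s * X t = X t * X s"
  shows "((\<lambda>s. exp (X s)) has_vector_derivative exp (X t) * X') (at t)"
proof -
  define D where "D s = X s - X t" for s
  have eq: "exp (X s) = exp (X t) * exp (D s)" for s
  proof -
    have "X t * D s = D s * X t" using c[of s] by (simp add: D_def algebra_simps)
    then have "exp (X t + D s) = exp (X t) * exp (D s)" by (rule exp_add_commuting)
    then show ?thesis by (simp add: D_def)
  qed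
  have dd: "(X has_derivative (\<lambda>h. h *\<^sub>R X')) (at t)" using d by (simp add: has_vector_derivative_def)
  then have eps: "((\<lambda>s. norm (D s - (s - t) *\<^sub>R X') / norm (s - t)) \<longlongrightarrow> 0) (at t)"
    unfolding has_derivative_iff_norm D_def by simp
  have contX: "(X \<longlongrightarrow> X t) (at t)"
    using has_vector_derivative_continuous[OF d] by (simp add: isCont_def)
  then have D0: "((\<lambda>s. norm (D s)) \<longlongrightarrow> 0) (at t)"
    unfolding D_def by (metis LIM_zero tendsto_norm_zero)
  define eps where "eps s = norm (D s - (s - t) *\<^sub>R X') / norm (s - t)" for s
  define g where "g s = norm (D s) * exp (norm (D s)) * (eps s + norm X') + eps s" for s
  have g0: "(g \<longlongrightarrow> 0) (at t)"
  proof -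
    have "(g \<longlongrightarrow> 0 * exp 0 * (0 + norm X') + 0) (at t)"
      unfolding g_def eps_def using D0 eps by (intro tendsto_intros) auto
    then show ?thesis by simp
  qed
  have bound: "norm (norm (exp (D s) - 1 - (s - t) *\<^sub>R X') / norm (s - t)) \<le> g s" if "s \<noteq> t" for s
  proof -
    have st: "norm (s - t) > 0" using that by simp
    have r: "norm (D s) / norm (s - t) \<le> eps s + norm X'"
    proof -
      have "norm (D s) \<le> norm (D s - (s - t) *\<^sub>R X') + norm ((s - t) *\<^sub>R X')"
        using norm_triangle_ineq[of "D s - (s - t) *\<^sub>R X'" "(s - t) *\<^sub>R X'"] by simp
      also have "\<dots> = norm (D s - (s - t) *\<^sub>R X') + norm (s - t) * norm X'" by simp
      finally show ?thesis using st unfolding eps_def by (simp add: field_simps)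
    qed
    have "norm (exp (D s) - 1 - (s - t) *\<^sub>R X') \<le> norm (exp (D s) - 1 - D s) + norm (D s - (s - t) *\<^sub>R X')"
      by (rule order_trans[OF _ norm_triangle_ineq]) (simp add: algebra_simps)
    also have "\<dots> \<le> norm (D s) ^ 2 * exp (norm (D s)) + norm (D s - (s - t) *\<^sub>R X')"
      using exp_minus_lin_bound[of "D s"] by simp
    finally have "norm (exp (D s) - 1 - (s - t) *\<^sub>R X') / norm (s - t)
        \<le> (norm (D s) ^ 2 * exp (norm (D s)) + norm (D s - (s - t) *\<^sub>R X')) / norm (s - t)"
      using st by (simp add: divide_right_mono)
    also have "\<dots> = norm (D s) * exp (norm (D s)) * (norm (D s) / norm (s - t)) + eps s"
      unfolding eps_def by (simp add: add_divide_distrib power2_eq_square)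
    also have "\<dots> \<le> norm (D s) * exp (norm (D s)) * (eps s + norm X') + eps s"
      by (intro add_right_mono mult_left_mono r) auto
    finally show ?thesis unfolding g_def by simp
  qed
  have "((\<lambda>s. norm (exp (D s) - exp (D t) - (s - t) *\<^sub>R X') / norm (s - t)) \<longlongrightarrow> 0) (at t)"
  proof (rule Lim_null_comparison[OF _ g0])
    show "\<forall>\<^sub>F s in at t. norm (norm (exp (D s) - exp (D t) - (s - t) *\<^sub>R X') / norm (s - t)) \<le> g s"
      unfolding eventually_at_filter using bound by (simp add: D_def)
  qed
  then have "((\<lambda>s. exp (D s)) has_derivative (\<lambda>h. h *\<^sub>R X')) (at t)"
    unfolding has_derivative_iff_norm by (simp add: bounded_linear_scaleR_left)
  then have "((\<lambda>s. exp (D s)) has_vector_derivative X') (at t)"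
    by (simp add: has_vector_derivative_def)
  then have "((\<lambda>s. exp (X t) * exp (D s)) has_vector_derivative exp (X t) * X') (at t)"
    by (rule has_vector_derivative_mult_right)
  then show ?thesis unfolding eq[symmetric] .
qed

lemma exp_commute:
  fixes x b :: "'a::{real_normed_algebra_1,banach}"
  assumes "x * b = b * x"
  shows "exp x * b = b * exp x"
proof -
  have s: "summable (\<lambda>n. x ^ n /\<^sub>R fact n)" by (rule summable_exp_generic)
  have "exp x * b = (\<Sum>n. x ^ n /\<^sub>R fact n * b)" unfolding exp_def by (rule suminf_mult2[OF s])
  also have "\<dots> = (\<Sum>n. b * (x ^ n /\<^sub>R fact n))"
    using power_commuting_commutes[OF assms] by (simp add: scaleR_left_commute)
  also have "\<dots> = b * exp x" unfolding exp_def by (rule suminf_mult[OF s])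
  finally show ?thesis .
qed


definition cmof :: "complex^'n^'n \<Rightarrow> ('n::finite) cm" where
  "cmof M = cmabs (Blinfun (\<lambda>v. M *v v))"

definition matof :: "('n::finite) cm \<Rightarrow> complex^'n^'n" where
  "matof L = (\<chi> i j. (blinfun_apply (cmrep L) (axis j 1)) $ i)"

lemma cmrep_cmof: "blinfun_apply (cmrep (cmof M)) = (\<lambda>v. M *v v)"
  unfolding cmof_def by (simp add: cmabs_inverse bounded_linear_Blinfun_apply)

lemma mv_axis: "(M *v axis j 1) $ i = M $ i $ j"
  by (simp add: matrix_vector_mult_def axis_def if_distrib cong: if_cong)

lemma matof_cmof[simp]: "matof (cmof M) = M"
  by (simp add: matof_def cmrep_cmof mv_axis vec_eq_iff)

lemma cmof_inj: "cmof M = cmof N \<Longrightarrow> M = N"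
  by (metis matof_cmof)

lemma cmof_eqI: "(\<And>v. blinfun_apply (cmrep a) v = blinfun_apply (cmrep b) v) \<Longrightarrow> a = b"
  by (metis blinfun_eqI cmrep_inject)

lemma cmof_mult: "cmof (M ** N) = cmof M * cmof N"
  by (rule cmof_eqI) (simp add: times_cm.rep_eq cmrep_cmof matrix_vector_mul_assoc)

lemma cmof_one: "cmof (mat 1) = 1"
  by (rule cmof_eqI) (simp add: one_cm.rep_eq cmrep_cmof)

lemma cmof_add: "cmof (M + N) = cmof M + cmof N"
  by (rule cmof_eqI) (simp add: plus_cm.rep_eq cmrep_cmof plus_blinfun.rep_eq matrix_vector_mult_add_rdistrib)

lemma cmof_scaleR: "cmof (r *\<^sub>R M) = r *\<^sub>R cmof M"
  by (rule cmof_eqI) (simp add: scaleR_cm.rep_eq cmrep_cmof scaleR_blinfun.rep_eq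
     matrix_vector_mult_def vec_eq_iff scaleR_sum_right)

lemma linear_cmof: "linear (cmof :: complex^'n^'n \<Rightarrow> ('n::finite) cm)"
  by (rule linearI) (simp_all add: cmof_add cmof_scaleR)

lemma bounded_linear_cmof: "bounded_linear (cmof :: complex^'n^'n \<Rightarrow> ('n::finite) cm)"
  using linear_cmof linear_conv_bounded_linear by blast

lemma norm_le_sum_cart: "norm (x :: 'a::real_normed_vector^'n) \<le> (\<Sum>i\<in>UNIV. norm (x $ i))"
  unfolding norm_vec_def by (rule L2_set_le_sum) simp

lemma bounded_linear_matof: "bounded_linear (matof :: ('n::finite) cm \<Rightarrow> complex^'n^'n)"
proof (rule bounded_linear_intro)
  fix a b :: "'n cm" and r :: real
  show "matof (a + b) = matof a + matof b"
    by (simp add: matof_def plus_cm.rep_eq plus_blinfun.rep_eq vec_eq_iff)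
  show "matof (r *\<^sub>R a) = r *\<^sub>R matof a"
    by (simp add: matof_def scaleR_cm.rep_eq scaleR_blinfun.rep_eq vec_eq_iff)
  have e: "norm (matof a $ i $ j) \<le> norm a" for i j
  proof -
    have "norm (matof a $ i $ j) = norm ((blinfun_apply (cmrep a) (axis j 1)) $ i)"
      by (simp add: matof_def)
    also have "\<dots> \<le> norm (blinfun_apply (cmrep a) (axis j 1))" by (rule Finite_Cartesian_Product.norm_nth_le)
    also have "\<dots> \<le> norm (cmrep a) * norm (axis j (1::complex))" by (rule norm_blinfun)
    also have "\<dots> = norm a" by (simp add: norm_cm.rep_eq)
    finally show ?thesis .
  qed
  have "norm (matof a) \<le> (\<Sum>i\<in>UNIV. norm (matof a $ i))" by (rule norm_le_sum_cart)
  also have "\<dots> \<le> (\<Sum>i\<in>(UNIV::'n set). \<Sum>j\<in>(UNIV::'n set). norm (matof a $ i $ j))"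
    by (intro sum_mono norm_le_sum_cart)
  also have "\<dots> \<le> (\<Sum>i\<in>(UNIV::'n set). \<Sum>j\<in>(UNIV::'n set). norm a)"
    by (intro sum_mono e)
  also have "\<dots> = norm a * (real CARD('n) * real CARD('n))" by simp
  finally show "norm (matof a) \<le> norm a * (real CARD('n) * real CARD('n))" .
qed


lemma cmof_mpow: "cmof (mpow M k) = cmof M ^ k"
  by (induction k) (simp_all add: mpow_0 mpow_Suc cmof_one cmof_mult)

lemma mexp_sums: "(\<lambda>k. (1 / fact k) *\<^sub>R mpow M k) sums matof (exp (cmof M))"
proof -
  have "(\<lambda>k. cmof M ^ k /\<^sub>R fact k) sums exp (cmof M)"
    unfolding exp_def by (rule summable_sums[OF summable_exp_generic])
  from bounded_linear.sums[OF bounded_linear_matof this]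
  have "(\<lambda>k. matof (cmof M ^ k /\<^sub>R fact k)) sums matof (exp (cmof M))" .
  moreover have "matof (cmof M ^ k /\<^sub>R fact k) = (1 / fact k) *\<^sub>R mpow M k" for k
    by (metis cmof_mpow cmof_scaleR matof_cmof divide_inverse_commute mult_1_right)
  ultimately show ?thesis by simp
qed

lemma mexp_matof: "mexp M = matof (exp (cmof M))"
  unfolding mexp_def using mexp_sums sums_unique by metis

lemma cmof_mexp: "cmof (mexp M) = exp (cmof M)"
proof -
  from bounded_linear.sums[OF bounded_linear_cmof mexp_sums[of M]]
  have "(\<lambda>k. cmof ((1 / fact k) *\<^sub>R mpow M k)) sums cmof (mexp M)" by (simp add: mexp_matof)
  moreover have "cmof ((1 / fact k) *\<^sub>R mpow M k) = cmof M ^ k /\<^sub>R fact k" for k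
    by (simp add: cmof_scaleR cmof_mpow divide_inverse_commute)
  ultimately have "(\<lambda>k. cmof M ^ k /\<^sub>R fact k) sums cmof (mexp M)" by simp
  then show ?thesis unfolding exp_def by (metis sums_unique)
qed

lemma mexp_add:
  assumes XY: "X ** Y = Y ** X" shows "mexp (X + Y) = mexp X ** mexp Y"
proof (rule cmof_inj)
  have c: "cmof X * cmof Y = cmof Y * cmof X" using XY by (metis cmof_mult)
  have "cmof (mexp (X + Y)) = exp (cmof X + cmof Y)" by (simp add: cmof_mexp cmof_add)
  also have "\<dots> = exp (cmof X) * exp (cmof Y)" by (rule exp_add_commuting[OF c])
  also have "\<dots> = cmof (mexp X ** mexp Y)" by (simp add: cmof_mexp cmof_mult)
  finally show "cmof (mexp (X + Y)) = cmof (mexp X ** mexp Y)" .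
qed

lemma mexp_zero: "mexp (0 :: complex^'n^'n) = mat 1"
proof (rule cmof_inj)
  have "cmof (0 :: complex^'n^'n) = 0" using linear_cmof linear_0 by blast
  then show "cmof (mexp (0 :: complex^'n^'n)) = cmof (mat 1)" by (simp add: cmof_mexp cmof_one)
qed

lemma mexp_comm:
  assumes XB: "X ** B = B ** X" shows "mexp X ** B = B ** mexp X"
proof (rule cmof_inj)
  have c: "cmof X * cmof B = cmof B * cmof X" using XB by (metis cmof_mult)
  show "cmof (mexp X ** B) = cmof (B ** mexp X)"
    by (simp add: cmof_mexp cmof_mult exp_commute[OF c])
qed

lemma mexp_deriv:
  fixes P :: "real \<Rightarrow> complex^'n^'n"
  assumes d: "(P has_vector_derivative P') (at t)" and c: "\<And>s. P s ** P t = P t ** P s"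
  shows "((\<lambda>s. mexp (P s)) has_vector_derivative mexp (P t) ** P') (at t)"
proof -
  have "((\<lambda>s. cmof (P s)) has_vector_derivative cmof P') (at t)"
    by (rule bounded_linear.has_vector_derivative[OF bounded_linear_cmof d])
  then have "((\<lambda>s. exp (cmof (P s))) has_vector_derivative exp (cmof (P t)) * cmof P') (at t)"
    by (rule exp_deriv_comm) (simp add: c flip: cmof_mult)
  from bounded_linear.has_vector_derivative[OF bounded_linear_matof this]
  show ?thesis by (simp add: mexp_matof[symmetric] flip: cmof_mexp cmof_mult)
qed


lemma smooth_cont: "smooth_fun f \<Longrightarrow> continuous_on UNIV f"
proof -
  assume "smooth_fun f"
  then obtain F where F: "F 0 = f" "\<And>k t. (F k has_vector_derivative F (Suc k) t) (at t)"
    unfolding smooth_fun_def by blast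
  have "isCont f t" for t using has_vector_derivative_continuous[OF F(2)[of 0 t]] F(1) by simp
  then show ?thesis by (simp add: continuous_at_imp_continuous_on)
qed

lemma bb_mm: "bounded_bilinear ((**) :: complex^'n^'n \<Rightarrow> complex^'n^'n \<Rightarrow> complex^'n^'n)"
  unfolding bilinear_conv_bounded_bilinear[symmetric] bilinear_def
  by (auto intro!: linearI simp: matrix_add_ldistrib matrix_add_rdistrib' matrix_scalar_ac scalar_matrix_assoc)

lemma bb_mv: "bounded_bilinear ((*v) :: complex^'n^'n \<Rightarrow> complex^'n \<Rightarrow> complex^'n)"
  unfolding bilinear_conv_bounded_bilinear[symmetric] bilinear_def
  by (auto intro!: linearI simp: matrix_vector_mult_add_rdistrib matrix_vector_right_distrib
      matrix_vector_mult_def vec_eq_iff scaleR_sum_right sum.distrib distrib_right)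

lemma mm_neg_left: "(- (X::complex^'n^'n)) ** (Y::complex^'n^'n) = - (X ** Y)"
  using bounded_bilinear.minus_left[OF bb_mm] by blast
lemma mm_neg_right: "(X::complex^'n^'n) ** (- Y::complex^'n^'n) = - (X ** Y)"
  using bounded_bilinear.minus_right[OF bb_mm] by blast
lemma mv_neg_left: "(- (X::complex^'n^'n)) *v (v::complex^'n) = - (X *v v)"
  using bounded_bilinear.minus_left[OF bb_mv] by blast

lemma blin_mm_left: "bounded_linear (\<lambda>X::complex^'n^'n. X ** (N::complex^'n^'n))"
  using bounded_bilinear.bounded_linear_left[OF bb_mm] .
lemma blin_mm_right: "bounded_linear (\<lambda>X::complex^'n^'n. (N::complex^'n^'n) ** X)"
  using bounded_bilinear.bounded_linear_right[OF bb_mm] .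

lemma oint_same: "oint a a F = 0"
  by (simp add: oint_def)

lemma oint_split:
  fixes F :: "real \<Rightarrow> 'b::euclidean_space"
  assumes cF: "continuous_on UNIV F" and ca: "c \<le> a" and cb: "c \<le> b"
  shows "oint a b F = integral {c..b} F - integral {c..a} F"
proof -
  have int: "F integrable_on {x..y}" for x y
    by (rule integrable_continuous_real) (rule continuous_on_subset[OF cF], simp)
  show ?thesis
  proof (cases "a \<le> b")
    case True
    have "integral {c..a} F + integral {a..b} F = integral {c..b} F"
      by (rule Henstock_Kurzweil_Integration.integral_combine[OF ca True int])
    then show ?thesis using True by (simp add: oint_def algebra_simps)
  next
    case False
    have "integral {c..b} F + integral {b..a} F = integral {c..a} F"
      using False by (intro Henstock_Kurzweil_Integration.integral_combine[OF cb _ int]) auto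
    then show ?thesis using False by (simp add: oint_def algebra_simps)
  qed
qed

lemma oint_diff:
  fixes F :: "real \<Rightarrow> 'b::euclidean_space"
  assumes cF: "continuous_on UNIV F"
  shows "oint a b F = oint 0 b F - oint 0 a F"
proof -
  define c where "c = min (min a b) 0"
  show ?thesis using oint_split[OF cF, of c] unfolding c_def by simp
qed

lemma oint_deriv:
  fixes F :: "real \<Rightarrow> 'b::euclidean_space"
  assumes cF: "continuous_on UNIV F"
  shows "((\<lambda>s. oint a s F) has_vector_derivative F t) (at t)"
proof -
  define c where "c = min a t - 1"
  define b where "b = t + 1"
  have dw: "((\<lambda>u. integral {c..u} F) has_vector_derivative F t) (at t within {c..b})"
    by (rule integral_has_vector_derivative) (auto intro: continuous_on_subset[OF cF] simp: c_def b_def)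
  have tin: "t \<in> interior {c..b}" by (simp add: c_def b_def)
  have d: "((\<lambda>u. integral {c..u} F) has_vector_derivative F t) (at t)"
    using dw unfolding at_within_interior[OF tin] .
  then have "((\<lambda>u. integral {c..u} F - integral {c..a} F) has_vector_derivative F t) (at t)"
    using has_vector_derivative_diff[OF d has_vector_derivative_const[of "integral {c..a} F"]] by simp
  then show ?thesis
  proof (rule has_vector_derivative_transform_within_open)
    show "open {c<..}" by simp
    show "t \<in> {c<..}" by (simp add: c_def)
    fix s assume "s \<in> {c<..}"
    then show "integral {c..s} F - integral {c..a} F = oint a s F"
      using oint_split[OF cF, of c a s] by (simp add: c_def)
  qed
qed

lemma oint_lin:
  fixes F :: "real \<Rightarrow> 'b::euclidean_space" and L :: "'b \<Rightarrow> 'c::euclidean_space"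
  assumes cF: "continuous_on UNIV F" and L: "bounded_linear L"
  shows "oint a b (\<lambda>u. L (F u)) = L (oint a b F)"
proof -
  have int: "F integrable_on {x..y}" for x y
    by (rule integrable_continuous_real) (rule continuous_on_subset[OF cF], simp)
  have "integral {x..y} (\<lambda>u. L (F u)) = L (integral {x..y} F)" for x y
    using integral_linear[OF int L] by (simp add: comp_def)
  then show ?thesis unfolding oint_def using linear_simps(4)[OF L] by simp
qed

lemma oint_cong: "(\<And>u. F u = G u) \<Longrightarrow> oint a b F = oint a b G"
  by (metis ext)


lemma H_decomp:
  fixes A :: "complex^'q^'q"
  defines "D \<equiv> SOME D. 0 < degree D \<and> peval_mat D A = 0"
  shows "vgp_eval h t A = (\<Sum>k\<in>{a. poly D a = 0} \<times> {..<degree D}.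
      mat (fps_nth (h t (fst k)) (snd k)) ** peval_mat (gp_rem (ebas (fst k) (snd k)) D) A)"
proof -
  have D: "0 < degree D \<and> peval_mat D A = 0" unfolding D_def by (rule someI_ex[OF annih_exists])
  then have D0: "D \<noteq> 0" by auto
  have fin: "finite ({a. poly D a = 0} \<times> {..<degree D})" using poly_roots_finite[OF D0] by simp
  have "vgp_eval h t A = peval_mat (gp_rem (h t) D) A"
    unfolding vgp_eval_def gp_eval_def Let_def D_def ..
  also have "\<dots> = (\<Sum>k\<in>{a. poly D a = 0} \<times> {..<degree D}.
      mat (fps_nth (h t (fst k)) (snd k)) ** peval_mat (gp_rem (ebas (fst k) (snd k)) D) A)"
    by (subst gp_rem_decomp[OF conjunct1[OF D]]) (simp only: peval_mat_sum[OF fin] peval_mat_smult)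
  finally show ?thesis .
qed

lemma H_cont:
  fixes A :: "complex^'q^'q"
  assumes sm: "\<And>a n. smooth_fun (\<lambda>t. fps_nth (h t a) n)"
  shows "continuous_on UNIV (\<lambda>t. vgp_eval h t A)"
proof -
  define D where "D \<equiv> SOME D. 0 < degree D \<and> peval_mat D A = 0"
  have e: "(\<lambda>t. vgp_eval h t A) = (\<lambda>t. \<Sum>k\<in>{a. poly D a = 0} \<times> {..<degree D}.
      mat (fps_nth (h t (fst k)) (snd k)) ** peval_mat (gp_rem (ebas (fst k) (snd k)) D) A)"
    unfolding D_def by (rule ext) (rule H_decomp)
  show ?thesis unfolding e mat_mult_left
    by (intro continuous_on_sum continuous_on_vec_lambda continuous_on_mult_right smooth_cont sm)
qed

lemma H_bc: "bc A (vgp_eval h t A)"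
  unfolding vgp_eval_def gp_eval_def Let_def by (rule bc_peval)

theorem mainTheorem8:
  fixes A :: "complex^'q^'q"
    and h :: vgpoly
    and f :: "real \<Rightarrow> complex^'q"
    and y0 :: "complex^'q"
  assumes h_smooth: "\<And>a n. smooth_fun (\<lambda>t. fps_nth (h t a) n)"
    and f_cont: "continuous_on UNIV f"
  defines "Y \<equiv> (\<lambda>t. mexp (oint t 0 (\<lambda>u. vgp_eval h u A)) *v y0
                 + oint 0 t (\<lambda>v. mexp (oint t v (\<lambda>u. vgp_eval h u A)) *v f v))"
  shows "(\<exists>Y'. (\<forall>t. (Y has_vector_derivative Y' t) (at t)) \<and> continuous_on UNIV Y' \<and>
            (\<forall>t. Y' t + vgp_eval h t A *v Y t = f t) \<and> Y 0 = y0)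
       \<and> (\<forall>y y'. (\<forall>t. (y has_vector_derivative y' t) (at t)) \<and> continuous_on UNIV y' \<and>
            (\<forall>t. y' t + vgp_eval h t A *v y t = f t) \<and> y 0 = y0 \<longrightarrow> y = Y)"
proof -
  define H where "H t = vgp_eval h t A" for t
  have HH: "(\<lambda>u. vgp_eval h u A) = H" by (rule ext) (simp add: H_def)
  have Hc: "continuous_on UNIV H" unfolding HH[symmetric] by (rule H_cont[OF h_smooth])
  have Hbc: "bc A (H t)" for t unfolding H_def by (rule H_bc)
  define P where "P s = oint 0 s H" for s
  have Pd: "(P has_vector_derivative H t) (at t)" for t
    unfolding P_def[abs_def] by (rule oint_deriv[OF Hc])
  have Pbc: "bc A (P s)" for s
    unfolding bc_def
  proof (intro allI impI)
    fix N assume NA: "N ** A = A ** N"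
    have "P s ** N = oint 0 s (\<lambda>u. H u ** N)"
      unfolding P_def by (rule oint_lin[OF Hc blin_mm_left, symmetric])
    also have "\<dots> = oint 0 s (\<lambda>u. N ** H u)"
      using Hbc NA unfolding bc_def by (intro oint_cong) auto
    also have "\<dots> = N ** P s" unfolding P_def by (rule oint_lin[OF Hc blin_mm_right])
    finally show "P s ** N = N ** P s" .
  qed
  have P0: "P 0 = 0" by (simp add: P_def oint_same)
  have bc_neg: "bc A (- M)" if "bc A M" for M
    using that unfolding bc_def by (simp add: mm_neg_left mm_neg_right)
  define E where "E s = mexp (- P s)" for s
  have Ed: "(E has_vector_derivative E t ** (- H t)) (at t)" for t
    unfolding E_def[abs_def]
    by (rule mexp_deriv[OF has_vector_derivative_minus[OF Pd]]) (intro bc_comm[of A] bc_neg Pbc)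
  have EP: "E t ** mexp (P t) = mat 1" for t
  proof -
    have "(- P t) ** P t = P t ** (- P t)" by (simp add: mm_neg_left mm_neg_right)
    from mexp_add[OF this] show ?thesis unfolding E_def by (simp add: mexp_zero)
  qed
  have HE: "H t ** E t = E t ** H t" for t
    unfolding E_def by (rule mexp_comm[symmetric]) (intro bc_comm[of A] bc_neg Pbc Hbc)
  have Md: "((\<lambda>s. mexp (P s)) has_vector_derivative mexp (P t) ** H t) (at t)" for t
    by (rule mexp_deriv[OF Pd]) (intro bc_comm[of A] Pbc)
  have Emc: "continuous_on UNIV (\<lambda>v. mexp (P v))"
    using Md has_vector_derivative_continuous continuous_at_imp_continuous_on by blast
  define K where "K v = mexp (P v) *v f v" for v
  have Kc: "continuous_on UNIV K"
    unfolding K_def[abs_def] by (rule bounded_bilinear.continuous_on[OF bb_mv Emc f_cont])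
  define G where "G s = oint 0 s K" for s
  have Gd: "(G has_vector_derivative K t) (at t)" for t
    unfolding G_def[abs_def] by (rule oint_deriv[OF Kc])
  have G0: "G 0 = 0" by (simp add: G_def oint_same)
  have Yeq: "Y t = E t *v (y0 + G t)" for t
  proof -
    have o1: "oint t 0 H = - P t" using oint_diff[OF Hc, of t 0] by (simp add: P_def oint_same)
    have o2: "mexp (oint t v H) = E t ** mexp (P v)" for v
    proof -
      have "oint t v H = - P t + P v" using oint_diff[OF Hc, of t v] by (simp add: P_def)
      moreover have "(- P t) ** P v = P v ** (- P t)" by (intro bc_comm[of A] bc_neg Pbc)
      ultimately show ?thesis unfolding E_def by (metis mexp_add)
    qed
    have "oint 0 t (\<lambda>v. mexp (oint t v H) *v f v) = oint 0 t (\<lambda>v. E t *v K v)"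
      by (rule oint_cong) (simp add: o2 K_def matrix_vector_mul_assoc)
    also have "\<dots> = E t *v G t"
      unfolding G_def by (rule oint_lin[OF Kc matrix_vector_mul_bounded_linear])
    finally have "oint 0 t (\<lambda>v. mexp (oint t v H) *v f v) = E t *v G t" .
    then show ?thesis unfolding Y_def HH o1 E_def[symmetric] by (simp add: matrix_vector_right_distrib)
  qed
  define Y' where "Y' t = f t - H t *v Y t" for t
  have Yd: "(Y has_vector_derivative Y' t) (at t)" for t
  proof -
    have d1: "((\<lambda>s. y0 + G s) has_vector_derivative K t) (at t)"
      using has_vector_derivative_add[OF has_vector_derivative_const Gd] by simp
    have "((\<lambda>s. E s *v (y0 + G s)) has_vector_derivative E t *v K t + (E t ** (- H t)) *v (y0 + G t)) (at t)"
      by (rule bounded_bilinear.has_vector_derivative[OF bb_mv Ed d1])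
    moreover have "E t *v K t + (E t ** (- H t)) *v (y0 + G t) = Y' t"
    proof -
      have "E t *v K t = f t" by (simp add: K_def matrix_vector_mul_assoc EP)
      moreover have "(E t ** (- H t)) *v (y0 + G t) = - (H t *v Y t)"
        by (simp add: mm_neg_right mv_neg_left HE[symmetric] Yeq matrix_vector_mul_assoc)
      ultimately show ?thesis by (simp add: Y'_def)
    qed
    moreover have "(\<lambda>s. E s *v (y0 + G s)) = Y" by (rule ext) (simp add: Yeq)
    ultimately show ?thesis by simp
  qed
  have Yc: "continuous_on UNIV Y"
    using Yd has_vector_derivative_continuous continuous_at_imp_continuous_on by blast
  have Y'c: "continuous_on UNIV Y'"
    unfolding Y'_def[abs_def]
    by (intro continuous_on_diff f_cont bounded_bilinear.continuous_on[OF bb_mv Hc Yc])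
  have Yeqn: "Y' t + H t *v Y t = f t" for t by (simp add: Y'_def)
  have Y0: "Y 0 = y0" by (simp add: Yeq E_def P0 G0 mexp_zero)
  show ?thesis
  proof (intro conjI allI impI)
    show "\<exists>Y'. (\<forall>t. (Y has_vector_derivative Y' t) (at t)) \<and> continuous_on UNIV Y' \<and>
            (\<forall>t. Y' t + vgp_eval h t A *v Y t = f t) \<and> Y 0 = y0"
      using Yd Y'c Yeqn Y0 unfolding H_def by blast
    fix y y'
    assume asm: "(\<forall>t. (y has_vector_derivative y' t) (at t)) \<and> continuous_on UNIV y' \<and>
            (\<forall>t. y' t + vgp_eval h t A *v y t = f t) \<and> y 0 = y0"
    define z where "z t = y t - Y t" for t
    have zd: "(z has_vector_derivative - (H t *v z t)) (at t)" for t
    proof -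
      have "(z has_vector_derivative y' t - Y' t) (at t)"
        unfolding z_def[abs_def] using asm Yd by (intro has_vector_derivative_diff) auto
      moreover have "y' t - Y' t = - (H t *v z t)"
      proof -
        have "y' t = f t - H t *v y t" using asm unfolding H_def by (metis add_diff_cancel_right')
        then show ?thesis by (simp add: Y'_def z_def matrix_vector_mult_diff_distrib)
      qed
      ultimately show ?thesis by simp
    qed
    define w where "w t = mexp (P t) *v z t" for t
    have wd: "(w has_vector_derivative 0) (at t)" for t
    proof -
      have "(w has_vector_derivative mexp (P t) *v (- (H t *v z t)) + (mexp (P t) ** H t) *v z t) (at t)"
        unfolding w_def[abs_def] by (rule bounded_bilinear.has_vector_derivative[OF bb_mv Md zd])
      moreover have "mexp (P t) *v (- (H t *v z t)) + (mexp (P t) ** H t) *v z t = 0"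
        by (simp add: linear_simps(4)[OF matrix_vector_mul_bounded_linear] matrix_vector_mul_assoc)
      ultimately show ?thesis by simp
    qed
    have "\<exists>c. \<forall>x\<in>UNIV. w x = c"
      by (rule has_derivative_zero_constant[of UNIV w])
         (use wd in \<open>auto simp: has_vector_derivative_def\<close>)
    then obtain c where c: "\<And>x. w x = c" by blast
    have z0: "z 0 = 0" using asm Y0 by (simp add: z_def)
    have "c = 0" using c[of 0] by (simp add: w_def P0 mexp_zero z0)
    show "y = Y"
    proof
      fix t
      have "z t = (E t ** mexp (P t)) *v z t" by (simp add: EP)
      also have "\<dots> = E t *v w t" by (simp add: w_def matrix_vector_mul_assoc)
      also have "\<dots> = 0" using c \<open>c = 0\<close> by simp
      finally show "y t = Y t" by (simp add: z_def)
    qed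
  qed
qed


end
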